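(* Let $G$ be the Halin graph built from the tree $T$ consisting of a centre $v_0$ adjacent to four vertices $v_1,v_2,v_3,v_4$, each $v_i$ having exactly two further neighbours (leaves) $v_{i1},v_{i2}$, with the eight leaves joined by the cycle $v_{11}v_{12}v_{21}v_{22}v_{31}v_{32}v_{41}v_{42}v_{11}$. For each edge $vw$ let $L(vw)=\{1,2,\ldots,\max(\deg(v),\deg(w))\}$ (so the four edges at $v_0$ get $\{1,2,3,4\}$ and all other edges get $\{1,2,3\}$). Then $G$ has no $L$-edge-colouring. Consequently the constant $4$ in the hypothesis $|L(vw)|\ge\max(\deg(v),\deg(w),4)$ of the list-colouring lemma for Halin graphs cannot be removed.
   Context: An $L$-edge-colouring is a map $\mathcal{C}$ on $E(G)$ with $\mathcal{C}(e)\in L(e)$ for every edge $e$ and with edges sharing an endpoint receiving different colours. A Halin graph is obtained by taking a planar embedding of a tree with no vertices of degree $2$ and adding a cycle through all its leaves in the cyclic order of the embedding. *)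

theory Defs
  imports Main
begin

text \<open>Vertices of the tree T: the centre v0, the four middle vertices v1..v4
  (Mid i), and the leaves v_ij (Leaf i j), i in 1..4, j in 1..2.\<close>
datatype vtx = Centre | Mid nat | Leaf nat nat

definition tree_edges :: "vtx set set" where
  "tree_edges =
     {{Centre, Mid i} | i. i \<in> {1..4}} \<union>
     {{Mid i, Leaf i j} | i j. i \<in> {1..4} \<and> j \<in> {1,2}}"

definition leaf_cycle :: "vtx list" where
  "leaf_cycle = [Leaf 1 1, Leaf 1 2, Leaf 2 1, Leaf 2 2,
                 Leaf 3 1, Leaf 3 2, Leaf 4 1, Leaf 4 2]"

definition cycle_edges :: "vtx set set" where
  "cycle_edges = {{leaf_cycle ! k, leaf_cycle ! ((k + 1) mod 8)} | k. k < 8}"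

definition halin_G :: "vtx set set" where
  "halin_G = tree_edges \<union> cycle_edges"

definition degree :: "'v set set \<Rightarrow> 'v \<Rightarrow> nat" where
  "degree E v = card {e \<in> E. v \<in> e}"

definition L_lists :: "vtx set \<Rightarrow> nat set" where
  "L_lists e = {1 .. Max (degree halin_G ` e)}"

definition is_L_edge_colouring ::
  "'v set set \<Rightarrow> ('v set \<Rightarrow> 'c set) \<Rightarrow> ('v set \<Rightarrow> 'c) \<Rightarrow> bool" where
  "is_L_edge_colouring E L C \<longleftrightarrow>
     (\<forall>e\<in>E. C e \<in> L e) \<and>
     (\<forall>e\<in>E. \<forall>f\<in>E. e \<noteq> f \<and> e \<inter> f \<noteq> {} \<longrightarrow> C e \<noteq> C f)"

end

theory Submission imports Defs begin

definition EL :: "vtx set list" where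
"EL = [{Centre, Mid 1},{Centre, Mid 2},{Centre, Mid 3},{Centre, Mid 4},
 {Mid 1, Leaf 1 1},{Mid 1, Leaf 1 2},{Mid 2, Leaf 2 1},{Mid 2, Leaf 2 2},
 {Mid 3, Leaf 3 1},{Mid 3, Leaf 3 2},{Mid 4, Leaf 4 1},{Mid 4, Leaf 4 2},
 {Leaf 1 1, Leaf 1 2},{Leaf 1 2, Leaf 2 1},{Leaf 2 1, Leaf 2 2},{Leaf 2 2, Leaf 3 1},
 {Leaf 3 1, Leaf 3 2},{Leaf 3 2, Leaf 4 1},{Leaf 4 1, Leaf 4 2},{Leaf 4 2, Leaf 1 1}]"

lemma i: "{1..4::nat} = {1,2,3,4}" by (auto simp: numeral_eq_Suc)
lemma a: "{{Centre, Mid i} | i. i \<in> {1..4}} = (\<lambda>i. {Centre, Mid i}) ` {1,2,3,4}"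
    unfolding i by blast
lemma b: "{{Mid i, Leaf i j} | i j. i \<in> {1..4} \<and> j \<in> {1,2}} = (\<lambda>(i,j). {Mid i, Leaf i j}) ` ({1,2,3,4} \<times> {1,2})"
  unfolding i by (auto simp del: insert_iff; auto)
lemma T_eq: "tree_edges = set (take 12 EL)"
  unfolding tree_edges_def a b EL_def by auto
lemma C_eq: "cycle_edges = set (drop 12 EL)"
proof -
  have "cycle_edges = (\<lambda>k. {leaf_cycle ! k, leaf_cycle ! ((k + 1) mod 8)}) ` set [0..<8]"
    unfolding cycle_edges_def by auto
  then show ?thesis by (simp add: EL_def leaf_cycle_def upt_rec insert_commute)
qed
lemma G_eq: "halin_G = set EL"
  unfolding halin_G_def T_eq C_eq set_append[symmetric] append_take_drop_id ..

lemma comb: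
  fixes a1 a2 a3 a4 b11 b12 b21 b22 b31 b32 b41 b42 c1 c2 c3 c4 c5 c6 c7 c8 :: nat
  assumes "a1 = 1 \<or> a1 = 2 \<or> a1 = 3 \<or> a1 = 4"
 and "a2 = 1 \<or> a2 = 2 \<or> a2 = 3 \<or> a2 = 4"
 and "a3 = 1 \<or> a3 = 2 \<or> a3 = 3 \<or> a3 = 4"
 and "a4 = 1 \<or> a4 = 2 \<or> a4 = 3 \<or> a4 = 4"
 and "b11 = 1 \<or> b11 = 2 \<or> b11 = 3"
 and "b12 = 1 \<or> b12 = 2 \<or> b12 = 3"
 and "b21 = 1 \<or> b21 = 2 \<or> b21 = 3"
 and "b22 = 1 \<or> b22 = 2 \<or> b22 = 3"
 and "b31 = 1 \<or> b31 = 2 \<or> b31 = 3"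
 and "b32 = 1 \<or> b32 = 2 \<or> b32 = 3"
 and "b41 = 1 \<or> b41 = 2 \<or> b41 = 3"
 and "b42 = 1 \<or> b42 = 2 \<or> b42 = 3"
 and "c1 = 1 \<or> c1 = 2 \<or> c1 = 3"
 and "c2 = 1 \<or> c2 = 2 \<or> c2 = 3"
 and "c3 = 1 \<or> c3 = 2 \<or> c3 = 3"
 and "c4 = 1 \<or> c4 = 2 \<or> c4 = 3"
 and "c5 = 1 \<or> c5 = 2 \<or> c5 = 3"
 and "c6 = 1 \<or> c6 = 2 \<or> c6 = 3"
 and "c7 = 1 \<or> c7 = 2 \<or> c7 = 3"
 and "c8 = 1 \<or> c8 = 2 \<or> c8 = 3"
 and "a1 \<noteq> a2"
 and "a1 \<noteq> a3"
 and "a1 \<noteq> a4"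
 and "a2 \<noteq> a3"
 and "a2 \<noteq> a4"
 and "a3 \<noteq> a4"
 and "a1 \<noteq> b11"
 and "a1 \<noteq> b12"
 and "b11 \<noteq> b12"
 and "a2 \<noteq> b21"
 and "a2 \<noteq> b22"
 and "b21 \<noteq> b22"
 and "a3 \<noteq> b31"
 and "a3 \<noteq> b32"
 and "b31 \<noteq> b32"
 and "a4 \<noteq> b41"
 and "a4 \<noteq> b42"
 and "b41 \<noteq> b42"
 and "b11 \<noteq> c8"
 and "b11 \<noteq> c1"
 and "c8 \<noteq> c1"
 and "b12 \<noteq> c1"
 and "b12 \<noteq> c2"
 and "c1 \<noteq> c2"
 and "b21 \<noteq> c2"
 and "b21 \<noteq> c3"
 and "c2 \<noteq> c3"
 and "b22 \<noteq> c3"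
 and "b22 \<noteq> c4"
 and "c3 \<noteq> c4"
 and "b31 \<noteq> c4"
 and "b31 \<noteq> c5"
 and "c4 \<noteq> c5"
 and "b32 \<noteq> c5"
 and "b32 \<noteq> c6"
 and "c5 \<noteq> c6"
 and "b41 \<noteq> c6"
 and "b41 \<noteq> c7"
 and "c6 \<noteq> c7"
 and "b42 \<noteq> c7"
 and "b42 \<noteq> c8"
 and "c7 \<noteq> c8"
  shows False
  using assms by (smt (z3))

lemma deg1: "degree halin_G (Centre) = 4"
  unfolding degree_def G_eq set_filter[symmetric] card_set
  by (simp add: EL_def doubleton_eq_iff)
lemma deg2: "degree halin_G (Mid 1) = 3"
  unfolding degree_def G_eq set_filter[symmetric] card_set
  by (simp add: EL_def doubleton_eq_iff)
lemma deg3: "degree halin_G (Mid 2) = 3"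
  unfolding degree_def G_eq set_filter[symmetric] card_set
  by (simp add: EL_def doubleton_eq_iff)
lemma deg4: "degree halin_G (Mid 3) = 3"
  unfolding degree_def G_eq set_filter[symmetric] card_set
  by (simp add: EL_def doubleton_eq_iff)
lemma deg5: "degree halin_G (Mid 4) = 3"
  unfolding degree_def G_eq set_filter[symmetric] card_set
  by (simp add: EL_def doubleton_eq_iff)
lemma deg6: "degree halin_G (Leaf 1 1) = 3"
  unfolding degree_def G_eq set_filter[symmetric] card_set
  by (simp add: EL_def doubleton_eq_iff)
lemma deg7: "degree halin_G (Leaf 1 2) = 3"
  unfolding degree_def G_eq set_filter[symmetric] card_set
  by (simp add: EL_def doubleton_eq_iff)
lemma deg8: "degree halin_G (Leaf 2 1) = 3"
  unfolding degree_def G_eq set_filter[symmetric] card_set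
  by (simp add: EL_def doubleton_eq_iff)
lemma deg9: "degree halin_G (Leaf 2 2) = 3"
  unfolding degree_def G_eq set_filter[symmetric] card_set
  by (simp add: EL_def doubleton_eq_iff)
lemma deg10: "degree halin_G (Leaf 3 1) = 3"
  unfolding degree_def G_eq set_filter[symmetric] card_set
  by (simp add: EL_def doubleton_eq_iff)
lemma deg11: "degree halin_G (Leaf 3 2) = 3"
  unfolding degree_def G_eq set_filter[symmetric] card_set
  by (simp add: EL_def doubleton_eq_iff)
lemma deg12: "degree halin_G (Leaf 4 1) = 3"
  unfolding degree_def G_eq set_filter[symmetric] card_set
  by (simp add: EL_def doubleton_eq_iff)
lemma deg13: "degree halin_G (Leaf 4 2) = 3"
  unfolding degree_def G_eq set_filter[symmetric] card_set
  by (simp add: EL_def doubleton_eq_iff)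
declare deg1[simplified, simp] deg1[simp] deg2[simplified, simp] deg2[simp] deg3[simplified, simp] deg3[simp] deg4[simplified, simp] deg4[simp] deg5[simplified, simp] deg5[simp] deg6[simplified, simp] deg6[simp] deg7[simplified, simp] deg7[simp] deg8[simplified, simp] deg8[simp] deg9[simplified, simp] deg9[simp] deg10[simplified, simp] deg10[simp] deg11[simplified, simp] deg11[simp] deg12[simplified, simp] deg12[simp] deg13[simplified, simp] deg13[simp]

theorem mainTheorem11:
  shows "\<not> (\<exists>C :: vtx set \<Rightarrow> nat. is_L_edge_colouring halin_G L_lists C)"
proof
  assume "\<exists>C :: vtx set \<Rightarrow> nat. is_L_edge_colouring halin_G L_lists C"
  then obtain C :: "vtx set \<Rightarrow> nat" where col: "is_L_edge_colouring halin_G L_lists C" by blast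
  have r: "\<And>e. e \<in> set EL \<Longrightarrow> C e \<in> L_lists e" using col by (simp add: is_L_edge_colouring_def G_eq)
  have d: "\<And>e f. e \<in> set EL \<Longrightarrow> f \<in> set EL \<Longrightarrow> e \<noteq> f \<Longrightarrow> e \<inter> f \<noteq> {} \<Longrightarrow> C e \<noteq> C f"
    using col unfolding is_L_edge_colouring_def G_eq by blast
  have f0: "C {Centre, Mid 1} = 1 \<or> C {Centre, Mid 1} = 2 \<or> C {Centre, Mid 1} = 3 \<or> C {Centre, Mid 1} = 4"
    using r[of "{Centre, Mid 1}"] by (simp add: EL_def L_lists_def) arith
  have f1: "C {Centre, Mid 2} = 1 \<or> C {Centre, Mid 2} = 2 \<or> C {Centre, Mid 2} = 3 \<or> C {Centre, Mid 2} = 4"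
    using r[of "{Centre, Mid 2}"] by (simp add: EL_def L_lists_def) arith
  have f2: "C {Centre, Mid 3} = 1 \<or> C {Centre, Mid 3} = 2 \<or> C {Centre, Mid 3} = 3 \<or> C {Centre, Mid 3} = 4"
    using r[of "{Centre, Mid 3}"] by (simp add: EL_def L_lists_def) arith
  have f3: "C {Centre, Mid 4} = 1 \<or> C {Centre, Mid 4} = 2 \<or> C {Centre, Mid 4} = 3 \<or> C {Centre, Mid 4} = 4"
    using r[of "{Centre, Mid 4}"] by (simp add: EL_def L_lists_def) arith
  have f4: "C {Mid 1, Leaf 1 1} = 1 \<or> C {Mid 1, Leaf 1 1} = 2 \<or> C {Mid 1, Leaf 1 1} = 3"
    using r[of "{Mid 1, Leaf 1 1}"] by (simp add: EL_def L_lists_def) arith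
  have f5: "C {Mid 1, Leaf 1 2} = 1 \<or> C {Mid 1, Leaf 1 2} = 2 \<or> C {Mid 1, Leaf 1 2} = 3"
    using r[of "{Mid 1, Leaf 1 2}"] by (simp add: EL_def L_lists_def) arith
  have f6: "C {Mid 2, Leaf 2 1} = 1 \<or> C {Mid 2, Leaf 2 1} = 2 \<or> C {Mid 2, Leaf 2 1} = 3"
    using r[of "{Mid 2, Leaf 2 1}"] by (simp add: EL_def L_lists_def) arith
  have f7: "C {Mid 2, Leaf 2 2} = 1 \<or> C {Mid 2, Leaf 2 2} = 2 \<or> C {Mid 2, Leaf 2 2} = 3"
    using r[of "{Mid 2, Leaf 2 2}"] by (simp add: EL_def L_lists_def) arith
  have f8: "C {Mid 3, Leaf 3 1} = 1 \<or> C {Mid 3, Leaf 3 1} = 2 \<or> C {Mid 3, Leaf 3 1} = 3"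
    using r[of "{Mid 3, Leaf 3 1}"] by (simp add: EL_def L_lists_def) arith
  have f9: "C {Mid 3, Leaf 3 2} = 1 \<or> C {Mid 3, Leaf 3 2} = 2 \<or> C {Mid 3, Leaf 3 2} = 3"
    using r[of "{Mid 3, Leaf 3 2}"] by (simp add: EL_def L_lists_def) arith
  have f10: "C {Mid 4, Leaf 4 1} = 1 \<or> C {Mid 4, Leaf 4 1} = 2 \<or> C {Mid 4, Leaf 4 1} = 3"
    using r[of "{Mid 4, Leaf 4 1}"] by (simp add: EL_def L_lists_def) arith
  have f11: "C {Mid 4, Leaf 4 2} = 1 \<or> C {Mid 4, Leaf 4 2} = 2 \<or> C {Mid 4, Leaf 4 2} = 3"
    using r[of "{Mid 4, Leaf 4 2}"] by (simp add: EL_def L_lists_def) arith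
  have f12: "C {Leaf 1 1, Leaf 1 2} = 1 \<or> C {Leaf 1 1, Leaf 1 2} = 2 \<or> C {Leaf 1 1, Leaf 1 2} = 3"
    using r[of "{Leaf 1 1, Leaf 1 2}"] by (simp add: EL_def L_lists_def) arith
  have f13: "C {Leaf 1 2, Leaf 2 1} = 1 \<or> C {Leaf 1 2, Leaf 2 1} = 2 \<or> C {Leaf 1 2, Leaf 2 1} = 3"
    using r[of "{Leaf 1 2, Leaf 2 1}"] by (simp add: EL_def L_lists_def) arith
  have f14: "C {Leaf 2 1, Leaf 2 2} = 1 \<or> C {Leaf 2 1, Leaf 2 2} = 2 \<or> C {Leaf 2 1, Leaf 2 2} = 3"
    using r[of "{Leaf 2 1, Leaf 2 2}"] by (simp add: EL_def L_lists_def) arith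
  have f15: "C {Leaf 2 2, Leaf 3 1} = 1 \<or> C {Leaf 2 2, Leaf 3 1} = 2 \<or> C {Leaf 2 2, Leaf 3 1} = 3"
    using r[of "{Leaf 2 2, Leaf 3 1}"] by (simp add: EL_def L_lists_def) arith
  have f16: "C {Leaf 3 1, Leaf 3 2} = 1 \<or> C {Leaf 3 1, Leaf 3 2} = 2 \<or> C {Leaf 3 1, Leaf 3 2} = 3"
    using r[of "{Leaf 3 1, Leaf 3 2}"] by (simp add: EL_def L_lists_def) arith
  have f17: "C {Leaf 3 2, Leaf 4 1} = 1 \<or> C {Leaf 3 2, Leaf 4 1} = 2 \<or> C {Leaf 3 2, Leaf 4 1} = 3"
    using r[of "{Leaf 3 2, Leaf 4 1}"] by (simp add: EL_def L_lists_def) arith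
  have f18: "C {Leaf 4 1, Leaf 4 2} = 1 \<or> C {Leaf 4 1, Leaf 4 2} = 2 \<or> C {Leaf 4 1, Leaf 4 2} = 3"
    using r[of "{Leaf 4 1, Leaf 4 2}"] by (simp add: EL_def L_lists_def) arith
  have f19: "C {Leaf 4 2, Leaf 1 1} = 1 \<or> C {Leaf 4 2, Leaf 1 1} = 2 \<or> C {Leaf 4 2, Leaf 1 1} = 3"
    using r[of "{Leaf 4 2, Leaf 1 1}"] by (simp add: EL_def L_lists_def) arith
  have f20: "C {Centre, Mid 1} \<noteq> C {Centre, Mid 2}"
    by (rule d) (simp_all add: EL_def doubleton_eq_iff)
  have f21: "C {Centre, Mid 1} \<noteq> C {Centre, Mid 3}"
    by (rule d) (simp_all add: EL_def doubleton_eq_iff)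
  have f22: "C {Centre, Mid 1} \<noteq> C {Centre, Mid 4}"
    by (rule d) (simp_all add: EL_def doubleton_eq_iff)
  have f23: "C {Centre, Mid 2} \<noteq> C {Centre, Mid 3}"
    by (rule d) (simp_all add: EL_def doubleton_eq_iff)
  have f24: "C {Centre, Mid 2} \<noteq> C {Centre, Mid 4}"
    by (rule d) (simp_all add: EL_def doubleton_eq_iff)
  have f25: "C {Centre, Mid 3} \<noteq> C {Centre, Mid 4}"
    by (rule d) (simp_all add: EL_def doubleton_eq_iff)
  have f26: "C {Centre, Mid 1} \<noteq> C {Mid 1, Leaf 1 1}"
    by (rule d) (simp_all add: EL_def doubleton_eq_iff)
  have f27: "C {Centre, Mid 1} \<noteq> C {Mid 1, Leaf 1 2}"
    by (rule d) (simp_all add: EL_def doubleton_eq_iff)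
  have f28: "C {Mid 1, Leaf 1 1} \<noteq> C {Mid 1, Leaf 1 2}"
    by (rule d) (simp_all add: EL_def doubleton_eq_iff)
  have f29: "C {Centre, Mid 2} \<noteq> C {Mid 2, Leaf 2 1}"
    by (rule d) (simp_all add: EL_def doubleton_eq_iff)
  have f30: "C {Centre, Mid 2} \<noteq> C {Mid 2, Leaf 2 2}"
    by (rule d) (simp_all add: EL_def doubleton_eq_iff)
  have f31: "C {Mid 2, Leaf 2 1} \<noteq> C {Mid 2, Leaf 2 2}"
    by (rule d) (simp_all add: EL_def doubleton_eq_iff)
  have f32: "C {Centre, Mid 3} \<noteq> C {Mid 3, Leaf 3 1}"
    by (rule d) (simp_all add: EL_def doubleton_eq_iff)
  have f33: "C {Centre, Mid 3} \<noteq> C {Mid 3, Leaf 3 2}"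
    by (rule d) (simp_all add: EL_def doubleton_eq_iff)
  have f34: "C {Mid 3, Leaf 3 1} \<noteq> C {Mid 3, Leaf 3 2}"
    by (rule d) (simp_all add: EL_def doubleton_eq_iff)
  have f35: "C {Centre, Mid 4} \<noteq> C {Mid 4, Leaf 4 1}"
    by (rule d) (simp_all add: EL_def doubleton_eq_iff)
  have f36: "C {Centre, Mid 4} \<noteq> C {Mid 4, Leaf 4 2}"
    by (rule d) (simp_all add: EL_def doubleton_eq_iff)
  have f37: "C {Mid 4, Leaf 4 1} \<noteq> C {Mid 4, Leaf 4 2}"
    by (rule d) (simp_all add: EL_def doubleton_eq_iff)
  have f38: "C {Mid 1, Leaf 1 1} \<noteq> C {Leaf 4 2, Leaf 1 1}"
    by (rule d) (simp_all add: EL_def doubleton_eq_iff)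
  have f39: "C {Mid 1, Leaf 1 1} \<noteq> C {Leaf 1 1, Leaf 1 2}"
    by (rule d) (simp_all add: EL_def doubleton_eq_iff)
  have f40: "C {Leaf 4 2, Leaf 1 1} \<noteq> C {Leaf 1 1, Leaf 1 2}"
    by (rule d) (simp_all add: EL_def doubleton_eq_iff)
  have f41: "C {Mid 1, Leaf 1 2} \<noteq> C {Leaf 1 1, Leaf 1 2}"
    by (rule d) (simp_all add: EL_def doubleton_eq_iff)
  have f42: "C {Mid 1, Leaf 1 2} \<noteq> C {Leaf 1 2, Leaf 2 1}"
    by (rule d) (simp_all add: EL_def doubleton_eq_iff)
  have f43: "C {Leaf 1 1, Leaf 1 2} \<noteq> C {Leaf 1 2, Leaf 2 1}"
    by (rule d) (simp_all add: EL_def doubleton_eq_iff)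
  have f44: "C {Mid 2, Leaf 2 1} \<noteq> C {Leaf 1 2, Leaf 2 1}"
    by (rule d) (simp_all add: EL_def doubleton_eq_iff)
  have f45: "C {Mid 2, Leaf 2 1} \<noteq> C {Leaf 2 1, Leaf 2 2}"
    by (rule d) (simp_all add: EL_def doubleton_eq_iff)
  have f46: "C {Leaf 1 2, Leaf 2 1} \<noteq> C {Leaf 2 1, Leaf 2 2}"
    by (rule d) (simp_all add: EL_def doubleton_eq_iff)
  have f47: "C {Mid 2, Leaf 2 2} \<noteq> C {Leaf 2 1, Leaf 2 2}"
    by (rule d) (simp_all add: EL_def doubleton_eq_iff)
  have f48: "C {Mid 2, Leaf 2 2} \<noteq> C {Leaf 2 2, Leaf 3 1}"
    by (rule d) (simp_all add: EL_def doubleton_eq_iff)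
  have f49: "C {Leaf 2 1, Leaf 2 2} \<noteq> C {Leaf 2 2, Leaf 3 1}"
    by (rule d) (simp_all add: EL_def doubleton_eq_iff)
  have f50: "C {Mid 3, Leaf 3 1} \<noteq> C {Leaf 2 2, Leaf 3 1}"
    by (rule d) (simp_all add: EL_def doubleton_eq_iff)
  have f51: "C {Mid 3, Leaf 3 1} \<noteq> C {Leaf 3 1, Leaf 3 2}"
    by (rule d) (simp_all add: EL_def doubleton_eq_iff)
  have f52: "C {Leaf 2 2, Leaf 3 1} \<noteq> C {Leaf 3 1, Leaf 3 2}"
    by (rule d) (simp_all add: EL_def doubleton_eq_iff)
  have f53: "C {Mid 3, Leaf 3 2} \<noteq> C {Leaf 3 1, Leaf 3 2}"
    by (rule d) (simp_all add: EL_def doubleton_eq_iff)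
  have f54: "C {Mid 3, Leaf 3 2} \<noteq> C {Leaf 3 2, Leaf 4 1}"
    by (rule d) (simp_all add: EL_def doubleton_eq_iff)
  have f55: "C {Leaf 3 1, Leaf 3 2} \<noteq> C {Leaf 3 2, Leaf 4 1}"
    by (rule d) (simp_all add: EL_def doubleton_eq_iff)
  have f56: "C {Mid 4, Leaf 4 1} \<noteq> C {Leaf 3 2, Leaf 4 1}"
    by (rule d) (simp_all add: EL_def doubleton_eq_iff)
  have f57: "C {Mid 4, Leaf 4 1} \<noteq> C {Leaf 4 1, Leaf 4 2}"
    by (rule d) (simp_all add: EL_def doubleton_eq_iff)
  have f58: "C {Leaf 3 2, Leaf 4 1} \<noteq> C {Leaf 4 1, Leaf 4 2}"
    by (rule d) (simp_all add: EL_def doubleton_eq_iff)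
  have f59: "C {Mid 4, Leaf 4 2} \<noteq> C {Leaf 4 1, Leaf 4 2}"
    by (rule d) (simp_all add: EL_def doubleton_eq_iff)
  have f60: "C {Mid 4, Leaf 4 2} \<noteq> C {Leaf 4 2, Leaf 1 1}"
    by (rule d) (simp_all add: EL_def doubleton_eq_iff)
  have f61: "C {Leaf 4 1, Leaf 4 2} \<noteq> C {Leaf 4 2, Leaf 1 1}"
    by (rule d) (simp_all add: EL_def doubleton_eq_iff)
  show False using comb[OF f0 f1 f2 f3 f4 f5 f6 f7 f8 f9 f10 f11 f12 f13 f14 f15 f16 f17 f18 f19 f20 f21 f22 f23 f24 f25 f26 f27 f28 f29 f30 f31 f32 f33 f34 f35 f36 f37 f38 f39 f40 f41 f42 f43 f44 f45 f46 f47 f48 f49 f50 f51 f52 f53 f54 f55 f56 f57 f58 f59 f60 f61] .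
qed

end
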